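(* Let $G=(V,D,B)$ be a simple mixed graph and $\Sigma$ a positive definite $V\times V$ matrix. Then $\Sigma\in\mathcal{M}_G$ if and only if $\mathcal{R}(\Sigma)\in\mathcal{M}_G$, where $\mathcal{R}(\Sigma)_{ij}=\Sigma_{ij}/\sqrt{\Sigma_{ii}\Sigma_{jj}}$.
   Context: A mixed graph with finite vertex set $V$ is a triple $G=(V,D,B)$ with $D$ a set of ordered pairs $(i,j)$, $i\ne j$ (directed edges) and $B$ a set of unordered pairs $\{i,j\}$, $i\ne j$ (bidirected edges); it is simple if any two distinct nodes are joined by at most one edge. $\mathbb{R}^D_{\mathrm{reg}}$ is the set of real $V\times V$ matrices $\Lambda$ with $\lambda_{ij}=0$ for $(i,j)\notin D$ and $I-\Lambda$ invertible; $\mathit{PD}(B)$ is the set of positive definite symmetric matrices $\Omega$ with $\omega_{ij}=0$ for $i\ne j$, $\{i,j\}\notin B$. $\mathcal{M}_G=\{(I-\Lambda)^{-T}\Omega(I-\Lambda)^{-1}:\Lambda\in\mathbb{R}^D_{\mathrm{reg}},\Omega\in\mathit{PD}(B)\}$. *)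

theory Defs
  imports "HOL-Analysis.Analysis"
begin

text \<open>A mixed graph on the finite vertex type 'n: directed edges D (ordered pairs)
  and bidirected edges B (unordered pairs, represented as two-element sets).\<close>

definition mixed_graph :: "('n \<times> 'n) set \<Rightarrow> 'n set set \<Rightarrow> bool" where
  "mixed_graph D B \<longleftrightarrow> (\<forall>(i,j)\<in>D. i \<noteq> j) \<and> (\<forall>e\<in>B. \<exists>i j. i \<noteq> j \<and> e = {i,j})"

definition simple_mixed_graph :: "('n \<times> 'n) set \<Rightarrow> 'n set set \<Rightarrow> bool" where
  "simple_mixed_graph D B \<longleftrightarrow> mixed_graph D B \<and>
     (\<forall>i j. \<not> ((i,j) \<in> D \<and> (j,i) \<in> D)) \<and>
     (\<forall>i j. \<not> ((i,j) \<in> D \<and> {i,j} \<in> B))"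

definition pos_def :: "real^'n^'n \<Rightarrow> bool" where
  "pos_def S \<longleftrightarrow> transpose S = S \<and> (\<forall>x. x \<noteq> 0 \<longrightarrow> x \<bullet> (S *v x) > 0)"

definition RegD :: "('n::finite \<times> 'n) set \<Rightarrow> (real^'n^'n) set" where
  "RegD D = {L. (\<forall>i j. (i,j) \<notin> D \<longrightarrow> L $ i $ j = 0) \<and> invertible (mat 1 - L)}"

definition PDB :: "'n::finite set set \<Rightarrow> (real^'n^'n) set" where
  "PDB B = {W. pos_def W \<and> (\<forall>i j. i \<noteq> j \<and> {i,j} \<notin> B \<longrightarrow> W $ i $ j = 0)}"

definition model :: "('n::finite \<times> 'n) set \<Rightarrow> 'n set set \<Rightarrow> (real^'n^'n) set" where
  "model D B = {transpose (matrix_inv (mat 1 - L)) ** W ** matrix_inv (mat 1 - L) | L W.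
                  L \<in> RegD D \<and> W \<in> PDB B}"

definition corr :: "real^'n^'n \<Rightarrow> real^'n^'n" where
  "corr S = (\<chi> i j. S $ i $ j / sqrt (S $ i $ i * S $ j $ j))"

end

theory Submission
  imports Defs
begin

definition dg :: "real^'n::finite \<Rightarrow> real^'n^'n" where
  "dg d = (\<chi> i j. if i = j then d$i else 0)"

lemma ifz1: "(if P then (a::real) else 0) * b = (if P then a * b else 0)" by simp
lemma ifz2: "b * (if P then (a::real) else 0) = (if P then b * a else 0)" by simp

lemma dg_left: "dg d ** M = (\<chi> i j. d$i * M$i$j)"
  by (simp add: dg_def matrix_matrix_mult_def vec_eq_iff ifz1 ifz2)

lemma dg_right: "M ** dg d = (\<chi> i j. M$i$j * d$j)"
  by (simp add: dg_def matrix_matrix_mult_def vec_eq_iff ifz1 ifz2)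

lemma dg_vec: "dg d *v x = (\<chi> i. d$i * x$i)"
  by (simp add: dg_def matrix_vector_mult_def vec_eq_iff ifz1 ifz2)

lemma dg_transpose: "transpose (dg d) = dg d"
  by (simp add: dg_def transpose_def vec_eq_iff)

lemma dg_inv:
  assumes "\<forall>i. d$i * e$i = 1"
  shows "dg d ** dg e = mat 1"
  using assms unfolding dg_left by (auto simp add: dg_def mat_def vec_eq_iff)

lemma minv:
  fixes A :: "real^'n::finite^'n"
  assumes "invertible A"
  shows "A ** matrix_inv A = mat 1 \<and> matrix_inv A ** A = mat 1"
  using assms unfolding invertible_def matrix_inv_def by (rule someI_ex)

lemma minv_unique:
  fixes A B :: "real^'n::finite^'n"
  assumes "A ** B = mat 1"
  shows "matrix_inv A = B"
proof -
  have inv: "invertible A" using assms invertible_right_inverse by blast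
  have "matrix_inv A = matrix_inv A ** (A ** B)" using assms by simp
  also have "\<dots> = B" using minv[OF inv] by (simp add: matrix_mul_assoc)
  finally show ?thesis .
qed

lemma dg_invertible:
  assumes "\<forall>i. d$i \<noteq> 0"
  shows "invertible (dg d)"
proof -
  have "dg d ** dg (\<chi> i. 1 / d$i) = mat 1" using assms by (intro dg_inv) simp
  thus ?thesis using invertible_right_inverse by blast
qed

lemma scale_model:
  fixes S :: "real^'n::finite^'n"
  assumes "S \<in> model D B" and d: "\<forall>i. d$i \<noteq> 0"
  shows "dg d ** S ** dg d \<in> model D B"
proof -
  obtain L W where S: "S = transpose (matrix_inv (mat 1 - L)) ** W ** matrix_inv (mat 1 - L)"
    and L: "L \<in> RegD D" and W: "W \<in> PDB B"
    using assms(1) unfolding model_def by blast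
  define e where "e = (\<chi> i. 1 / d$i)"
  define E where "E = dg d"
  define F where "F = dg e"
  define M where "M = mat 1 - L"
  define A where "A = matrix_inv M"
  have EF: "E ** F = mat 1" unfolding E_def F_def e_def using d by (intro dg_inv) simp
  have FE: "F ** E = mat 1" unfolding E_def F_def e_def using d by (intro dg_inv) simp
  have FE': "F ** (E ** X) = X" for X :: "real^'n^'n"
    by (metis FE matrix_mul_assoc matrix_mul_lid)
  have EF': "E ** (F ** X) = X" for X :: "real^'n^'n"
    by (metis EF matrix_mul_assoc matrix_mul_lid)
  have Minv: "invertible M" using L unfolding RegD_def M_def by blast
  have MA: "M ** A = mat 1" and AM: "A ** M = mat 1" using minv[OF Minv] unfolding A_def by auto
  define L' where "L' = F ** L ** E"
  have M': "mat 1 - L' = F ** M ** E"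
    unfolding L'_def M_def F_def E_def
    by (simp add: dg_left dg_right vec_eq_iff mat_def e_def d algebra_simps)
  have L'supp: "\<forall>i j. (i,j) \<notin> D \<longrightarrow> L' $ i $ j = 0"
    using L unfolding RegD_def L'_def F_def E_def by (simp add: dg_left dg_right)
  have inv': "(F ** M ** E) ** (F ** A ** E) = mat 1"
    proof -
    have "M ** (A ** X) = X" for X :: "real^'n^'n" by (metis MA matrix_mul_assoc matrix_mul_lid)
    have "(F ** M ** E) ** (F ** A ** E) = F ** (M ** (E ** (F ** (A ** E))))"
      by (metis matrix_mul_assoc)
    also have "\<dots> = F ** (M ** (A ** E))" by (simp only: EF')
    also have "\<dots> = F ** E" using \<open>\<And>X. M ** (A ** X) = X\<close> by simp
    finally show ?thesis using FE by simp
  qed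
  have A': "matrix_inv (mat 1 - L') = F ** A ** E"
    using M' inv' minv_unique by metis
  have L'R: "L' \<in> RegD D"
  proof -
    have "invertible (mat 1 - L')" unfolding M' using inv' invertible_right_inverse by blast
    thus ?thesis using L'supp unfolding RegD_def by blast
  qed
  define W' where "W' = E ** W ** E"
  have Wpd: "pos_def W" and Wsupp: "\<forall>i j. i \<noteq> j \<and> {i,j} \<notin> B \<longrightarrow> W $ i $ j = 0"
    using W unfolding PDB_def by auto
  have tE: "transpose E = E" unfolding E_def by (rule dg_transpose)
  have tF: "transpose F = F" unfolding F_def by (rule dg_transpose)
  have "transpose W' = W'" using Wpd unfolding W'_def pos_def_def
    by (simp add: matrix_transpose_mul tE matrix_mul_assoc)
  moreover have "x \<bullet> (W' *v x) > 0" if "x \<noteq> 0" for x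
  proof -
    have Ex: "E *v x \<noteq> 0"
    proof
      assume "E *v x = 0"
      then have "F *v (E *v x) = 0" by simp
      then have "x = 0" by (simp add: matrix_vector_mul_assoc FE)
      thus False using that by simp
    qed
    have "x \<bullet> (W' *v x) = x \<bullet> (E *v (W *v (E *v x)))"
      unfolding W'_def by (simp only: matrix_vector_mul_assoc[symmetric])
    also have "\<dots> = (x v* E) \<bullet> (W *v (E *v x))" by (simp add: dot_lmul_matrix)
    also have "x v* E = E *v x" by (metis tE transpose_matrix_vector)
    finally show ?thesis using Wpd Ex unfolding pos_def_def by simp
  qed
  moreover have "\<forall>i j. i \<noteq> j \<and> {i,j} \<notin> B \<longrightarrow> W' $ i $ j = 0"
    using Wsupp unfolding W'_def E_def by (simp add: dg_left dg_right)
  ultimately have W'P: "W' \<in> PDB B" unfolding PDB_def pos_def_def by blast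
  have "transpose (matrix_inv (mat 1 - L')) ** W' ** matrix_inv (mat 1 - L')
        = E ** transpose A ** F ** (E ** W ** E) ** F ** A ** E"
    unfolding A' W'_def by (simp add: matrix_transpose_mul tE tF matrix_mul_assoc)
  also have "\<dots> = E ** S ** E"
    unfolding S A_def M_def by (simp add: matrix_mul_assoc[symmetric] FE' EF')
  finally have eq: "transpose (matrix_inv (mat 1 - L')) ** W' ** matrix_inv (mat 1 - L') = dg d ** S ** dg d"
    unfolding E_def .
  show ?thesis unfolding model_def
    by (rule CollectI, rule exI[of _ L'], rule exI[of _ W']) (use eq L'R W'P in auto)
qed

theorem lemma3:
  fixes D :: "('n::finite \<times> 'n) set" and B :: "'n set set" and S :: "real^'n^'n"
  assumes "simple_mixed_graph D B"
    and "pos_def S"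
  shows "S \<in> model D B \<longleftrightarrow> corr S \<in> model D B"
proof -
  have pos: "S $ i $ i > 0" for i
  proof -
    have "axis i (1::real) \<noteq> 0" by (simp add: axis_eq_0_iff)
    then have "axis i 1 \<bullet> (S *v axis i 1) > 0" using assms(2) unfolding pos_def_def by blast
    moreover have "axis i 1 \<bullet> (S *v axis i 1) = S $ i $ i"
      by (simp add: inner_vec_def matrix_vector_mult_def axis_def ifz1 ifz2)
    ultimately show ?thesis by simp
  qed
  define d where "d = (\<chi> i. 1 / sqrt (S $ i $ i))"
  define d' where "d' = (\<chi> i. sqrt (S $ i $ i))"
  have c1: "corr S = dg d ** S ** dg d"
    unfolding d_def corr_def by (simp add: dg_left dg_right vec_eq_iff real_sqrt_mult)
  have c2: "S = dg d' ** corr S ** dg d'"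
    unfolding d'_def corr_def using pos
    by (simp add: dg_left dg_right vec_eq_iff real_sqrt_mult less_imp_neq[symmetric])
  have nd: "\<forall>i. d$i \<noteq> 0" "\<forall>i. d'$i \<noteq> 0" unfolding d_def d'_def using pos
    by (simp_all add: less_imp_neq[symmetric])
  show ?thesis using scale_model[OF _ nd(1), of S] scale_model[OF _ nd(2), of "corr S"] c1 c2
    by metis
qed

end
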